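(* Let $m\ge1$ be an integer, $\Gamma_1,\Gamma_2$ co-prime integers with $1<\Gamma_1<\Gamma_2$, $m_1=m\Gamma_1$, $m_2=m\Gamma_2$, let $1\le j\le K+1$, and let $\tau$ be a real number with $\tau<m\sigma_j/4$. For every integer $N$ with $0\le N<\min\big(m_2(1+\ddot n_{2,j}),\,m_1(1+\ddot n_{1,j})\big)$ and every pair of erroneous remainders $\tilde r_1,\tilde r_2$ of $N$ with $|\Delta r_i|\le\tau$ for $i=1,2$, Algorithm 2 (with index $j$) returns $\hat n_1=n_1$ and $\hat n_2=n_2$.
   Context: $|a|_b$ is the remainder of the integer $a$ modulo the positive integer $b$; $[x]=\lfloor x+1/2\rfloor$. For an integer $N\ge0$: folding integers $n_i=\lfloor N/m_i\rfloor$, remainders $r_i=N-n_im_i$; erroneous remainders are integers $\tilde r_i$ with $0\le\tilde r_i<m_i$, errors $\Delta r_i=\tilde r_i-r_i$. Euclidean sequence: $\sigma_{-1}=\Gamma_2$, $\sigma_0=\Gamma_1$, $\sigma_i=|\sigma_{i-2}|_{\sigma_{i-1}}$ for $i\ge1$; $K\ge0$ is the index with $\sigma_K>1$, $\sigma_{K+1}=1$. For $1\le n<\Gamma_1$, $S_{2,n}=\{|t\Gamma_2|_{\Gamma_1}:0\le t\le n\}$, $d_{2,n}$ = minimum distance between distinct elements of $S_{2,n}$; for $1\le n<\Gamma_2$, $S_{1,n}=\{|t\Gamma_1|_{\Gamma_2}:0\le t\le n\}$, $d_{1,n}$ likewise. $\ddot n_{2,j}=\max\{n:1\le n<\Gamma_1,\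 d_{2,n}\ge\sigma_j\}$, $\ddot n_{1,j}=\max\{n:1\le n<\Gamma_2,\ d_{1,n}\ge\sigma_j\}$. $\bar\Gamma_{21}$ is the inverse of $\Gamma_2$ modulo $\Gamma_1$, $\bar\Gamma_{12}$ the inverse of $\Gamma_1$ modulo $\Gamma_2$. Algorithm 2 (index $j$, input $\tilde r_1,\tilde r_2$): compute $\mathbf q_{21}=(\tilde r_1-\tilde r_2)/m$. (i) If $\mathbf q_{21}\ge\sigma_j/2$: if some $x\in S_{2,\ddot n_{2,j}}$ satisfies $-\sigma_j/2\le\mathbf q_{21}-x<\sigma_j/2$, let $s_2=x$; otherwise let $s_2$ be an element of $S_{2,\ddot n_{2,j}}$ at minimum distance from $\mathbf q_{21}$. Let $\hat n_2\in[0,\Gamma_1)$ with $\hat n_2\equiv s_2\bar\Gamma_{21}\pmod{\Gamma_1}$ and $\hat n_1=[(\hat n_2m_2+\tilde r_2-\tilde r_1)/m_1]$. (ii) If $\mathbf q_{21}<-\sigma_j/2$: if some $y\in S_{1,\ddot n_{1,j}}$ satisfies $-\sigma_j/2\le\mathbf q_{21}+y<\sigma_j/2$, let $s_1=y$; otherwise let $s_1$ be an element of $S_{1,\ddot n_{1,j}}$ at minimum distance from $-\mathbf q_{21}$. Let $\hat n_1\in[0,\Gamma_2)$ with $\hat n_1\equiv s_1\bar\Gamma_{12}\pmod{\Gamma_2}$ and $\hat n_2=[(\hat n_1m_1+\tilde r_1-\tilde r_2)/m_2]$. (iii) If $-\sigma_j/2\le\mathbf q_{21}<\sigma_j/2$: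 $\hat n_1=\hat n_2=0$. *)

theory Defs
  imports "HOL-Number_Theory.Number_Theory"
begin

(* Euclidean sequence, shifted by one: esq G1 G2 i = sigma_{i-1};
   esq 0 = sigma_{-1} = Gamma_2, esq 1 = sigma_0 = Gamma_1. *)
fun esq :: "int \<Rightarrow> int \<Rightarrow> nat \<Rightarrow> int" where
  "esq G1 G2 0 = G2"
| "esq G1 G2 (Suc 0) = G1"
| "esq G1 G2 (Suc (Suc i)) = esq G1 G2 i mod esq G1 G2 (Suc i)"

definition sigma :: "int \<Rightarrow> int \<Rightarrow> nat \<Rightarrow> int" where
  "sigma G1 G2 j = esq G1 G2 (Suc j)"

definition Kidx :: "int \<Rightarrow> int \<Rightarrow> nat" where
  "Kidx G1 G2 = (THE K. sigma G1 G2 K > 1 \<and> sigma G1 G2 (Suc K) = 1)"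

(* Sset a b n = { |t a|_b : 0 <= t <= n };
   S_{2,n} = Sset Gamma_2 Gamma_1 n,  S_{1,n} = Sset Gamma_1 Gamma_2 n *)
definition Sset :: "int \<Rightarrow> int \<Rightarrow> int \<Rightarrow> int set" where
  "Sset a b n = {(t * a) mod b | t. 0 \<le> t \<and> t \<le> n}"

definition mindist :: "int set \<Rightarrow> int" where
  "mindist A = Min {\<bar>x - y\<bar> | x y. x \<in> A \<and> y \<in> A \<and> x \<noteq> y}"

(* nddot a b s = max { n : 1 <= n < b, mindist (Sset a b n) >= s };
   ddot n_{2,j} = nddot Gamma_2 Gamma_1 sigma_j,  ddot n_{1,j} = nddot Gamma_1 Gamma_2 sigma_j *)
definition nddot :: "int \<Rightarrow> int \<Rightarrow> int \<Rightarrow> int" where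
  "nddot a b s = Max {n. 1 \<le> n \<and> n < b \<and> mindist (Sset a b n) \<ge> s}"

definition modinv :: "int \<Rightarrow> int \<Rightarrow> int" where
  "modinv a b = (THE x. 0 \<le> x \<and> x < b \<and> [a * x = 1] (mod b))"

definition rnd :: "real \<Rightarrow> int" where
  "rnd x = \<lfloor>x + 1/2\<rfloor>"

(* Algorithm 2 as a relation: alg2 m G1 G2 j rt1 rt2 n1h n2h holds iff
   (n1h, n2h) is a possible output of Algorithm 2 with index j on input rt1, rt2
   (the "element at minimum distance" choice is nondeterministic). *)
definition alg2 :: "int \<Rightarrow> int \<Rightarrow> int \<Rightarrow> nat \<Rightarrow> int \<Rightarrow> int \<Rightarrow> int \<Rightarrow> int \<Rightarrow> bool" where
  "alg2 m G1 G2 j rt1 rt2 n1h n2h \<longleftrightarrow>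
    (let m1 = m * G1; m2 = m * G2;
         sj = real_of_int (sigma G1 G2 j);
         q = real_of_int (rt1 - rt2) / real_of_int m;
         S2 = Sset G2 G1 (nddot G2 G1 (sigma G1 G2 j));
         S1 = Sset G1 G2 (nddot G1 G2 (sigma G1 G2 j))
     in
     (q \<ge> sj / 2 \<and>
       (\<exists>s2\<in>S2.
          (if (\<exists>x\<in>S2. - sj / 2 \<le> q - of_int x \<and> q - of_int x < sj / 2)
           then - sj / 2 \<le> q - of_int s2 \<and> q - of_int s2 < sj / 2
           else (\<forall>y\<in>S2. \<bar>q - of_int s2\<bar> \<le> \<bar>q - of_int y\<bar>)) \<and>
          n2h = (s2 * modinv G2 G1) mod G1 \<and>
          n1h = rnd (real_of_int (n2h * m2 + rt2 - rt1) / real_of_int m1)))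
   \<or> (q < - sj / 2 \<and>
       (\<exists>s1\<in>S1.
          (if (\<exists>y\<in>S1. - sj / 2 \<le> q + of_int y \<and> q + of_int y < sj / 2)
           then - sj / 2 \<le> q + of_int s1 \<and> q + of_int s1 < sj / 2
           else (\<forall>y\<in>S1. \<bar>- q - of_int s1\<bar> \<le> \<bar>- q - of_int y\<bar>)) \<and>
          n1h = (s1 * modinv G1 G2) mod G2 \<and>
          n2h = rnd (real_of_int (n1h * m1 + rt1 - rt2) / real_of_int m2)))
   \<or> (- sj / 2 \<le> q \<and> q < sj / 2 \<and> n1h = 0 \<and> n2h = 0))"

end

theory Submission imports Defs begin

lemma modinv_prop:
  fixes a b :: int
  assumes "coprime a b" "1 < b"
  shows "0 \<le> modinv a b \<and> modinv a b < b \<and> [a * modinv a b = 1] (mod b)"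
proof -
  obtain x where x: "[a * x = 1] (mod b)" using cong_solve_coprime_int[OF assms(1)] by blast
  have "[a * (x mod b) = 1] (mod b)"
    using x by (metis cong_def mod_mult_right_eq)
  moreover have "0 \<le> x mod b" "x mod b < b" using assms by auto
  ultimately have ex: "\<exists>y. 0 \<le> y \<and> y < b \<and> [a * y = 1] (mod b)" by blast
  have uq: "y = z" if "0 \<le> y \<and> y < b \<and> [a * y = 1] (mod b)" "0 \<le> z \<and> z < b \<and> [a * z = 1] (mod b)" for y z
  proof -
    have "[a * y = a * z] (mod b)" using that by (meson cong_sym cong_trans)
    then have "[y = z] (mod b)" using cong_mult_lcancel assms(1) by blast
    then show ?thesis using that cong_less_imp_eq_int by blast
  qed
  have "\<exists>!y. 0 \<le> y \<and> y < b \<and> [a * y = 1] (mod b)" using ex uq by blast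
  from theI'[OF this] show ?thesis unfolding modinv_def .
qed

lemma Sset_img: "Sset a b n = (\<lambda>t. (t*a) mod b) ` {0..n}"
  unfolding Sset_def by auto

lemma Sset_finite: "finite (Sset a b n)"
  unfolding Sset_img by simp

lemma Sset_mem: "0 \<le> t \<Longrightarrow> t \<le> n \<Longrightarrow> (t*a) mod b \<in> Sset a b n"
  unfolding Sset_def by auto

lemma mindist_le:
  assumes "finite A" "x \<in> A" "y \<in> A" "x \<noteq> y"
  shows "mindist A \<le> \<bar>x - y\<bar>"
proof -
  have "{\<bar>x - y\<bar> | x y. x \<in> A \<and> y \<in> A \<and> x \<noteq> y} \<subseteq> (\<lambda>(x,y). \<bar>x - y\<bar>) ` (A \<times> A)"
    by auto
  then have "finite {\<bar>x - y\<bar> | x y. x \<in> A \<and> y \<in> A \<and> x \<noteq> y}"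
    using assms(1) finite_subset by blast
  then show ?thesis unfolding mindist_def using assms by (intro Min_le) auto
qed

lemma Sset_1: "Sset a b 1 = {0, a mod b}"
proof -
  have "{0..(1::int)} = {0,1}" by auto
  then show ?thesis unfolding Sset_img by simp
qed

lemma mindist_2: "c > 0 \<Longrightarrow> mindist {0, c} = (c::int)"
proof -
  assume "c > 0"
  then have "{\<bar>x - y\<bar> | x y. x \<in> {0,c} \<and> y \<in> {0,c} \<and> x \<noteq> y} = {c}"
    apply auto
    apply (rule exI[of _ c], rule exI[of _ 0])
    by simp
  then show ?thesis unfolding mindist_def by simp
qed

lemma nddot_prop:
  fixes a b s :: int
  assumes "1 < b" "0 < a mod b" "s \<le> a mod b"
  shows "1 \<le> nddot a b s \<and> nddot a b s < b \<and> s \<le> mindist (Sset a b (nddot a b s))"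
proof -
  let ?T = "{n. 1 \<le> n \<and> n < b \<and> mindist (Sset a b n) \<ge> s}"
  have "?T \<subseteq> {1..<b}" by auto
  then have fin: "finite ?T" using finite_subset by blast
  have "1 \<in> ?T" using assms by (simp add: Sset_1 mindist_2)
  then have "Max ?T \<in> ?T" using fin by (intro Max_in) auto
  then show ?thesis unfolding nddot_def by simp
qed

lemma esq_bound:
  fixes G1 G2 :: int
  assumes "coprime G1 G2" "1 < G1"
  shows "0 \<le> esq G1 G2 (i+2) \<and> esq G1 G2 (i+2) \<le> G2 mod G1 \<and>
         0 \<le> esq G1 G2 (i+3) \<and> esq G1 G2 (i+3) \<le> G2 mod G1"
proof (induction i)
  case 0
  have pos: "0 < G2 mod G1"
  proof (rule ccontr)
    assume "\<not> 0 < G2 mod G1"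
    then have "G2 mod G1 = 0" using assms(2) by (smt (verit) pos_mod_sign)
    then have "G1 dvd G2" by auto
    then have "is_unit G1" using assms(1) by (metis coprime_common_divisor dvd_refl)
    then show False using assms(2) by simp
  qed
  have e2: "esq G1 G2 2 = G2 mod G1" by (simp add: numeral_eq_Suc)
  have e3: "esq G1 G2 3 = G1 mod (G2 mod G1)" by (simp add: numeral_eq_Suc)
  show ?case using pos e2 e3 by (simp add: order_less_imp_le)
next
  case (Suc i)
  have a: "Suc i + 3 = Suc(Suc(Suc(Suc i)))" "i+2 = Suc(Suc i)" "i+3 = Suc(Suc(Suc i))" by simp_all
  have e: "esq G1 G2 (Suc i + 3) = esq G1 G2 (i+2) mod esq G1 G2 (i+3)"
    unfolding a by (rule esq.simps(3))
  have "0 \<le> esq G1 G2 (Suc i + 3) \<and> esq G1 G2 (Suc i + 3) \<le> G2 mod G1"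
  proof (cases "esq G1 G2 (i+3) = 0")
    case True then show ?thesis using e Suc by simp
  next
    case False
    then have "0 < esq G1 G2 (i+3)" using Suc by simp
    then show ?thesis using e Suc
      by (smt (verit) pos_mod_bound pos_mod_sign)
  qed
  moreover have h1: "esq G1 G2 (Suc i + 2) = esq G1 G2 (i+3)"
    by (rule arg_cong[where f="esq G1 G2"]) simp
  ultimately show ?case using Suc.IH unfolding h1 by blast
qed

lemma div_bound: "0 < (M::real) \<Longrightarrow> \<bar>x\<bar> < M/2 \<Longrightarrow> \<bar>x/M\<bar> < 1/2"
  by (simp add: abs_divide divide_less_eq)

lemma rnd_eq: "\<bar>e\<bar> < 1/2 \<Longrightarrow> rnd (real_of_int n + e) = n"
  unfolding rnd_def by (intro floor_unique) auto

theorem corollary1: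
  fixes m G1 G2 N rt1 rt2 n1h n2h :: int and j :: nat and \<tau> :: real
  assumes "m \<ge> 1"
    and "coprime G1 G2" and "1 < G1" and "G1 < G2"
    and "1 \<le> j" and "j \<le> Kidx G1 G2 + 1"
    and "\<tau> < real_of_int m * real_of_int (sigma G1 G2 j) / 4"
    and "0 \<le> N"
    and "N < min (m * G2 * (1 + nddot G2 G1 (sigma G1 G2 j)))
                 (m * G1 * (1 + nddot G1 G2 (sigma G1 G2 j)))"
    and "0 \<le> rt1" and "rt1 < m * G1"
    and "0 \<le> rt2" and "rt2 < m * G2"
    and "\<bar>real_of_int (rt1 - N mod (m * G1))\<bar> \<le> \<tau>"
    and "\<bar>real_of_int (rt2 - N mod (m * G2))\<bar> \<le> \<tau>"
    and "alg2 m G1 G2 j rt1 rt2 n1h n2h"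
  shows "n1h = N div (m * G1) \<and> n2h = N div (m * G2)"
proof -
  define s where "s = sigma G1 G2 j"
  define n2d where "n2d = nddot G2 G1 s"
  define n1d where "n1d = nddot G1 G2 s"
  define q where "q = real_of_int (rt1 - rt2) / real_of_int m"
  define n1 where "n1 = N div (m * G1)"
  define n2 where "n2 = N div (m * G2)"
  define r1 where "r1 = N mod (m * G1)"
  define r2 where "r2 = N mod (m * G2)"
  define qt where "qt = n2 * G2 - n1 * G1"
  have cop: "coprime G2 G1" using assms(2) by (simp add: coprime_commute)
  have tau0: "0 \<le> \<tau>" using assms(14) by linarith
  have "0 < real_of_int m * real_of_int s" using tau0 assms(7) unfolding s_def by linarith
  then have s0: "0 < s" using assms(1) by (simp add: zero_less_mult_iff)
  have sb: "s \<le> G2 mod G1"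
  proof -
    have "Suc j = (j - 1) + 2" using assms(5) by simp
    then show ?thesis unfolding s_def sigma_def using esq_bound[OF assms(2,3), of "j-1"] by simp
  qed
  have g2pos: "0 < G2 mod G1" using s0 sb by simp
  have g2lt: "G2 mod G1 < G1" using assms(3) by simp
  have nd2: "1 \<le> n2d \<and> n2d < G1 \<and> s \<le> mindist (Sset G2 G1 n2d)"
    unfolding n2d_def using nddot_prop[OF assms(3) g2pos sb] .
  have g1m: "G1 mod G2 = G1" using assms(3,4) by simp
  have nd1: "1 \<le> n1d \<and> n1d < G2 \<and> s \<le> mindist (Sset G1 G2 n1d)"
    unfolding n1d_def using nddot_prop[of G2 G1 s] assms(3,4) g1m sb g2lt by simp
  have m1p: "0 < m * G1" "0 < m * G2" using assms(1,3,4) by simp_all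
  have N1: "N = n1 * (m * G1) + r1" unfolding n1_def r1_def by (metis div_mult_mod_eq)
  have N2: "N = n2 * (m * G2) + r2" unfolding n2_def r2_def by (metis div_mult_mod_eq)
  have r1b: "0 \<le> r1" "r1 < m * G1" unfolding r1_def using m1p by simp_all
  have r2b: "0 \<le> r2" "r2 < m * G2" unfolding r2_def using m1p by simp_all
  have n1p: "0 \<le> n1" unfolding n1_def using m1p assms(8) by (simp add: pos_imp_zdiv_nonneg_iff)
  have n2p: "0 \<le> n2" unfolding n2_def using m1p assms(8) by (simp add: pos_imp_zdiv_nonneg_iff)
  have "n2 * (m * G2) < (1 + n2d) * (m * G2)"
    using N2 r2b assms(9) unfolding n2d_def s_def by (simp add: algebra_simps)
  then have n2le: "n2 \<le> n2d" using m1p by (simp add: mult_less_cancel_right)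
  have "n1 * (m * G1) < (1 + n1d) * (m * G1)"
    using N1 r1b assms(9) unfolding n1d_def s_def by (simp add: algebra_simps)
  then have n1le: "n1 \<le> n1d" using m1p by (simp add: mult_less_cancel_right)
  have rq: "r1 - r2 = m * qt" using N1 N2 unfolding qt_def by (simp add: algebra_simps)
  have "m * (- G2) < m * qt" using rq r1b r2b by simp
  then have qtl: "- G2 < qt" using assms(1) mult_less_cancel_left_pos[of m "-G2" qt] by simp
  have "m * qt < m * G1" using rq r1b r2b by simp
  then have qtu: "qt < G1" using assms(1) mult_less_cancel_left_pos[of m qt G1] by simp
  have qtS2: "qt \<in> Sset G2 G1 n2d" if "0 \<le> qt"
  proof -
    have "(n2 * G2) mod G1 = (qt + n1 * G1) mod G1" unfolding qt_def by simp
    also have "\<dots> = qt mod G1" by simp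
    also have "\<dots> = qt" using that qtu by simp
    finally show ?thesis using Sset_mem[OF n2p n2le, of G2 G1] by simp
  qed
  have qtS1: "- qt \<in> Sset G1 G2 n1d" if "qt < 0"
  proof -
    have "(n1 * G1) mod G2 = (- qt + n2 * G2) mod G2" unfolding qt_def by simp
    also have "\<dots> = (- qt) mod G2" by (metis mod_mult_self3 add.commute)
    also have "\<dots> = - qt" using that qtl by simp
    finally show ?thesis using Sset_mem[OF n1p n1le, of G1 G2] by simp
  qed
  define d1 where "d1 = rt1 - r1"
  define d2 where "d2 = rt2 - r2"
  have d1b: "\<bar>real_of_int d1\<bar> \<le> \<tau>" using assms(14) unfolding d1_def r1_def .
  have d2b: "\<bar>real_of_int d2\<bar> \<le> \<tau>" using assms(15) unfolding d2_def r2_def .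
  have mr: "0 < real_of_int m" using assms(1) by simp
  have "rt1 - rt2 = m * qt + (d1 - d2)" using rq unfolding d1_def d2_def by simp
  then have "real_of_int (rt1 - rt2) = real_of_int m * real_of_int qt + real_of_int (d1 - d2)"
    by (metis of_int_add of_int_mult)
  then have qeq: "q = real_of_int qt + real_of_int (d1 - d2) / real_of_int m"
    unfolding q_def using mr by (simp add: add_divide_distrib)
  have dd: "\<bar>real_of_int (d1 - d2)\<bar> < real_of_int m * real_of_int s / 2"
    using d1b d2b assms(7) unfolding s_def by linarith
  have "\<bar>real_of_int (d1 - d2)\<bar> / real_of_int m < (real_of_int m * real_of_int s / 2) / real_of_int m"
    by (rule divide_strict_right_mono[OF dd mr])
  moreover have "(real_of_int m * real_of_int s / 2) / real_of_int m = real_of_int s / 2"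
    using mr by (metis nonzero_mult_div_cancel_left times_divide_eq_right less_irrefl)
  moreover have "\<bar>real_of_int (d1 - d2) / real_of_int m\<bar> = \<bar>real_of_int (d1 - d2)\<bar> / real_of_int m"
    by (rule abs_div_pos[OF mr, symmetric])
  ultimately have "\<bar>real_of_int (d1 - d2) / real_of_int m\<bar> < real_of_int s / 2"
    by linarith
  then have qclose: "\<bar>q - real_of_int qt\<bar> < real_of_int s / 2" using qeq by simp
  have sG1: "real_of_int s \<le> real_of_int G1" using sb g2lt by simp
  have rnd1: "\<bar>real_of_int (d2 - d1) / real_of_int (m * G1)\<bar> < 1/2"
  proof -
    have "\<bar>real_of_int (d2 - d1)\<bar> < real_of_int m * real_of_int s / 2"
      using dd by (simp add: abs_minus_commute)
    also have "\<dots> \<le> real_of_int (m * G1) / 2" using sG1 mr by simp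
    finally show ?thesis by (rule div_bound[rotated]) (use m1p in \<open>simp only: of_int_0_less_iff\<close>)
  qed
  have sG2: "real_of_int s \<le> real_of_int G2" using sb g2lt assms(4) by simp
  have rnd2: "\<bar>real_of_int (d1 - d2) / real_of_int (m * G2)\<bar> < 1/2"
  proof -
    have "\<bar>real_of_int (d1 - d2)\<bar> < real_of_int m * real_of_int s / 2"
      using dd by simp
    also have "\<dots> \<le> real_of_int (m * G2) / 2" using sG2 mr by simp
    finally show ?thesis by (rule div_bound[rotated]) (use m1p in \<open>simp only: of_int_0_less_iff\<close>)
  qed
  have sep2: "x = y" if "x \<in> Sset G2 G1 n2d" "y \<in> Sset G2 G1 n2d" "\<bar>x - y\<bar> < s" for x y
    using mindist_le[OF Sset_finite that(1,2)] nd2 that(3) by force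
  have sep1: "x = y" if "x \<in> Sset G1 G2 n1d" "y \<in> Sset G1 G2 n1d" "\<bar>x - y\<bar> < s" for x y
    using mindist_le[OF Sset_finite that(1,2)] nd1 that(3) by force
  have inv2: "[G2 * modinv G2 G1 = 1] (mod G1)" using modinv_prop[OF cop assms(3)] by simp
  have inv1: "[G1 * modinv G1 G2 = 1] (mod G2)" using modinv_prop[OF assms(2)] assms(3,4) by simp
  have A: "(q \<ge> real_of_int s / 2 \<and>
       (\<exists>s2\<in>Sset G2 G1 n2d.
          (if (\<exists>x\<in>Sset G2 G1 n2d. - real_of_int s / 2 \<le> q - of_int x \<and> q - of_int x < real_of_int s / 2)
           then - real_of_int s / 2 \<le> q - of_int s2 \<and> q - of_int s2 < real_of_int s / 2
           else (\<forall>y\<in>Sset G2 G1 n2d. \<bar>q - of_int s2\<bar> \<le> \<bar>q - of_int y\<bar>)) \<and>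
          n2h = (s2 * modinv G2 G1) mod G1 \<and>
          n1h = rnd (real_of_int (n2h * (m * G2) + rt2 - rt1) / real_of_int (m * G1))))
   \<or> (q < - real_of_int s / 2 \<and>
       (\<exists>s1\<in>Sset G1 G2 n1d.
          (if (\<exists>y\<in>Sset G1 G2 n1d. - real_of_int s / 2 \<le> q + of_int y \<and> q + of_int y < real_of_int s / 2)
           then - real_of_int s / 2 \<le> q + of_int s1 \<and> q + of_int s1 < real_of_int s / 2
           else (\<forall>y\<in>Sset G1 G2 n1d. \<bar>- q - of_int s1\<bar> \<le> \<bar>- q - of_int y\<bar>)) \<and>
          n1h = (s1 * modinv G1 G2) mod G2 \<and>
          n2h = rnd (real_of_int (n1h * (m * G1) + rt1 - rt2) / real_of_int (m * G2))))
   \<or> (- real_of_int s / 2 \<le> q \<and> q < real_of_int s / 2 \<and> n1h = 0 \<and> n2h = 0)"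
    using assms(16) unfolding alg2_def Let_def s_def[symmetric] n1d_def[symmetric]
      n2d_def[symmetric] q_def[symmetric] .
  then show ?thesis
  proof (elim disjE conjE)
    assume c: "q \<ge> real_of_int s / 2"
    assume "\<exists>s2\<in>Sset G2 G1 n2d.
          (if (\<exists>x\<in>Sset G2 G1 n2d. - real_of_int s / 2 \<le> q - of_int x \<and> q - of_int x < real_of_int s / 2)
           then - real_of_int s / 2 \<le> q - of_int s2 \<and> q - of_int s2 < real_of_int s / 2
           else (\<forall>y\<in>Sset G2 G1 n2d. \<bar>q - of_int s2\<bar> \<le> \<bar>q - of_int y\<bar>)) \<and>
          n2h = (s2 * modinv G2 G1) mod G1 \<and>
          n1h = rnd (real_of_int (n2h * (m * G2) + rt2 - rt1) / real_of_int (m * G1))"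
    then obtain s2 where s2S: "s2 \<in> Sset G2 G1 n2d" and H:
      "(if (\<exists>x\<in>Sset G2 G1 n2d. - real_of_int s / 2 \<le> q - of_int x \<and> q - of_int x < real_of_int s / 2)
           then - real_of_int s / 2 \<le> q - of_int s2 \<and> q - of_int s2 < real_of_int s / 2
           else (\<forall>y\<in>Sset G2 G1 n2d. \<bar>q - of_int s2\<bar> \<le> \<bar>q - of_int y\<bar>))"
      and e2: "n2h = (s2 * modinv G2 G1) mod G1"
      and e1: "n1h = rnd (real_of_int (n2h * (m * G2) + rt2 - rt1) / real_of_int (m * G1))"
      by blast
    have qt0: "0 \<le> qt" using c qclose s0 by linarith
    have win: "- real_of_int s / 2 \<le> q - of_int qt \<and> q - of_int qt < real_of_int s / 2"
      using qclose by linarith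
    then have ex: "\<exists>x\<in>Sset G2 G1 n2d. - real_of_int s / 2 \<le> q - of_int x \<and> q - of_int x < real_of_int s / 2"
      using qtS2[OF qt0] by blast
    have "- real_of_int s / 2 \<le> q - of_int s2 \<and> q - of_int s2 < real_of_int s / 2"
      using H by (simp only: ex if_True)
    then have "\<bar>real_of_int (s2 - qt)\<bar> < real_of_int s" using win by linarith
    then have "\<bar>s2 - qt\<bar> < s" by linarith
    then have s2q: "s2 = qt" using sep2 s2S qtS2[OF qt0] by blast
    have "n2h = (qt * modinv G2 G1) mod G1" using e2 s2q by simp
    also have "\<dots> = (n2 * (G2 * modinv G2 G1) + (- n1 * modinv G2 G1) * G1) mod G1"
      unfolding qt_def by (simp add: algebra_simps)
    also have "\<dots> = (n2 * (G2 * modinv G2 G1)) mod G1" by (rule mod_mult_self1)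
    also have "\<dots> = (n2 * 1) mod G1"
      using inv2 unfolding cong_def by (metis mod_mult_right_eq)
    also have "\<dots> = n2" using n2p n2le nd2 by simp
    finally have h2: "n2h = n2" .
    have "n2h * (m * G2) + rt2 - rt1 = (m * G1) * n1 + (d2 - d1)"
      using h2 N1 N2 unfolding d1_def d2_def by (simp add: algebra_simps)
    then have "real_of_int (n2h * (m * G2) + rt2 - rt1) = real_of_int (m * G1) * real_of_int n1 + real_of_int (d2 - d1)"
      by (metis of_int_add of_int_mult)
    then have "real_of_int (n2h * (m * G2) + rt2 - rt1) / real_of_int (m * G1)
        = real_of_int n1 + real_of_int (d2 - d1) / real_of_int (m * G1)"
      using m1p assms(1,3,4) by (simp add: add_divide_distrib)
    then have "n1h = n1" using e1 rnd_eq[OF rnd1] by simp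
    then show ?thesis using h2 unfolding n1_def n2_def by simp
  next
    assume c: "q < - real_of_int s / 2"
    assume "\<exists>s1\<in>Sset G1 G2 n1d.
          (if (\<exists>y\<in>Sset G1 G2 n1d. - real_of_int s / 2 \<le> q + of_int y \<and> q + of_int y < real_of_int s / 2)
           then - real_of_int s / 2 \<le> q + of_int s1 \<and> q + of_int s1 < real_of_int s / 2
           else (\<forall>y\<in>Sset G1 G2 n1d. \<bar>- q - of_int s1\<bar> \<le> \<bar>- q - of_int y\<bar>)) \<and>
          n1h = (s1 * modinv G1 G2) mod G2 \<and>
          n2h = rnd (real_of_int (n1h * (m * G1) + rt1 - rt2) / real_of_int (m * G2))"
    then obtain s1 where s1S: "s1 \<in> Sset G1 G2 n1d" and H:
      "(if (\<exists>y\<in>Sset G1 G2 n1d. - real_of_int s / 2 \<le> q + of_int y \<and> q + of_int y < real_of_int s / 2)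
           then - real_of_int s / 2 \<le> q + of_int s1 \<and> q + of_int s1 < real_of_int s / 2
           else (\<forall>y\<in>Sset G1 G2 n1d. \<bar>- q - of_int s1\<bar> \<le> \<bar>- q - of_int y\<bar>))"
      and e1: "n1h = (s1 * modinv G1 G2) mod G2"
      and e2: "n2h = rnd (real_of_int (n1h * (m * G1) + rt1 - rt2) / real_of_int (m * G2))"
      by blast
    have qt0: "qt < 0" using c qclose s0 by linarith
    have win: "- real_of_int s / 2 \<le> q + of_int (- qt) \<and> q + of_int (- qt) < real_of_int s / 2"
      using qclose by linarith
    then have ex: "\<exists>y\<in>Sset G1 G2 n1d. - real_of_int s / 2 \<le> q + of_int y \<and> q + of_int y < real_of_int s / 2"
      using qtS1[OF qt0] by blast
    have "- real_of_int s / 2 \<le> q + of_int s1 \<and> q + of_int s1 < real_of_int s / 2"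
      using H by (simp only: ex if_True)
    then have "\<bar>real_of_int (s1 - (- qt))\<bar> < real_of_int s" using win by linarith
    then have "\<bar>s1 - (- qt)\<bar> < s" by linarith
    then have s1q: "s1 = - qt" using sep1 s1S qtS1[OF qt0] by blast
    have "n1h = ((- qt) * modinv G1 G2) mod G2" using e1 s1q by simp
    also have "\<dots> = (n1 * (G1 * modinv G1 G2) + (- n2 * modinv G1 G2) * G2) mod G2"
      unfolding qt_def by (simp add: algebra_simps)
    also have "\<dots> = (n1 * (G1 * modinv G1 G2)) mod G2" by (rule mod_mult_self1)
    also have "\<dots> = (n1 * 1) mod G2"
      using inv1 unfolding cong_def by (metis mod_mult_right_eq)
    also have "\<dots> = n1" using n1p n1le nd1 by simp
    finally have h1: "n1h = n1" .
    have "n1h * (m * G1) + rt1 - rt2 = (m * G2) * n2 + (d1 - d2)"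
      using h1 N1 N2 unfolding d1_def d2_def by (simp add: algebra_simps)
    then have "real_of_int (n1h * (m * G1) + rt1 - rt2) = real_of_int (m * G2) * real_of_int n2 + real_of_int (d1 - d2)"
      by (metis of_int_add of_int_mult)
    then have "real_of_int (n1h * (m * G1) + rt1 - rt2) / real_of_int (m * G2)
        = real_of_int n2 + real_of_int (d1 - d2) / real_of_int (m * G2)"
      using m1p assms(1,3,4) by (simp add: add_divide_distrib)
    then have "n2h = n2" using e2 rnd_eq[OF rnd2] by simp
    then show ?thesis using h1 unfolding n1_def n2_def by simp
  next
    assume c1: "- real_of_int s / 2 \<le> q" and c2: "q < real_of_int s / 2"
      and z: "n1h = 0" "n2h = 0"
    have qts: "\<bar>real_of_int qt\<bar> < real_of_int s" using c1 c2 qclose by linarith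
    have "qt = 0"
    proof (rule ccontr)
      assume ne: "qt \<noteq> 0"
      show False
      proof (cases "0 < qt")
        case True
        have "(0 * G2) mod G1 \<in> Sset G2 G1 n2d" using Sset_mem[of 0 n2d] nd2 by simp
        then have "0 \<in> Sset G2 G1 n2d" by simp
        then have "s \<le> \<bar>qt - 0\<bar>"
          using mindist_le[OF Sset_finite qtS2] True nd2 by force
        then show False using qts by linarith
      next
        case False
        then have qn: "qt < 0" using ne by simp
        have "(0 * G1) mod G2 \<in> Sset G1 G2 n1d" using Sset_mem[of 0 n1d] nd1 by simp
        then have "0 \<in> Sset G1 G2 n1d" by simp
        then have "s \<le> \<bar>- qt - 0\<bar>"
          using mindist_le[OF Sset_finite qtS1[OF qn]] qn nd1 by force
        then show False using qts by linarith
      qed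
    qed
    then have eq: "n2 * G2 = n1 * G1" unfolding qt_def by simp
    then have "G1 dvd n2 * G2" by simp
    then have "G1 dvd n2" using assms(2) by (simp add: coprime_dvd_mult_left_iff)
    then have "n2 = 0" using n2p n2le nd2 by (meson zdvd_imp_le not_le order_le_less_trans zdvd_not_zless linorder_neqE_linordered_idom)
    then have "n1 = 0" using eq assms(3) by simp
    then show ?thesis using z \<open>n2 = 0\<close> unfolding n1_def n2_def by simp
  qed
qed

end
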